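(* Let $w\in\mathbb R^n_{\ge0}$ and let $\eta$ be as defined below. Then: (i) $\eta$ is non-decreasing on $[0,n]$; (ii) $\eta(ah)\le 2a\,\eta(h)$ for all $a\ge1$ and $h\in[1,n/a]$; (iii) if $X\sim\mathrm{Bin}(m,p)$ is a binomial random variable with $1\le mp\le m\le n$, then $\mathbb E[\eta(X)]\le 3\,\eta(mp)$.
   Context: For $a\in[0,n]$, $\eta(a)$ is the expected value of $\max_{i\in R}w_i$, where $R$ is a uniformly random subset of $\{1,\dots,n\}$ of size $\lfloor a\rfloor$ (without repetition); by convention $\eta(a)=0$ for $a\in[0,1)$. *)

theory Defs
  imports "HOL-Probability.Probability"
begin

definition eta :: "(nat \<Rightarrow> real) \<Rightarrow> nat \<Rightarrow> real \<Rightarrow> real" where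
  "eta w n a =
     (if a < 1 then 0
      else (let k = nat \<lfloor>a\<rfloor> in
              (\<Sum>R\<in>{R. R \<subseteq> {1..n} \<and> card R = k}. Max (w ` R)) / real (n choose k)))"

end

theory Submission
  imports Defs
begin

definition CS :: "nat \<Rightarrow> nat \<Rightarrow> nat set set" where
  "CS n k = {R. R \<subseteq> {1..n} \<and> card R = k}"
definition SM :: "(nat \<Rightarrow> real) \<Rightarrow> nat \<Rightarrow> nat \<Rightarrow> real" where
  "SM w n k = (\<Sum>R\<in>CS n k. Max (w ` R))"
definition avg :: "(nat \<Rightarrow> real) \<Rightarrow> nat \<Rightarrow> nat \<Rightarrow> real" where
  "avg w n k = SM w n k / real (n choose k)"

lemma eta_avg: "a \<ge> 1 \<Longrightarrow> eta w n a = avg w n (nat \<lfloor>a\<rfloor>)"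
  by (simp add: eta_def avg_def SM_def CS_def Let_def)

lemma finite_CS[simp]: "finite (CS n k)"
  unfolding CS_def by (rule finite_subset[of _ "Pow {1..n}"]) auto

lemma card_subs: "finite S \<Longrightarrow> card {A. A \<subseteq> S \<and> card A = j} = card S choose j"
  using n_subsets by blast

lemma count_sup:
  assumes A: "A \<in> CS n j" and jK: "j \<le> K"
  shows "card {S\<in>CS n K. A \<subseteq> S} = (n - j) choose (K - j)"
proof -
  have Au: "A \<subseteq> {1..n}" "card A = j" using A by (auto simp: CS_def)
  have fA: "finite A" using Au(1) finite_subset by blast
  have "bij_betw (\<lambda>S. S - A) {S\<in>CS n K. A \<subseteq> S} {B. B \<subseteq> {1..n} - A \<and> card B = K - j}"
  proof (rule bij_betw_byWitness[where f = "\<lambda>S. S - A" and f' = "\<lambda>B. B \<union> A"])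
    show "\<forall>S\<in>{S \<in> CS n K. A \<subseteq> S}. S - A \<union> A = S" by auto
    show "\<forall>B\<in>{B. B \<subseteq> {1..n} - A \<and> card B = K - j}. B \<union> A - A = B" by auto
    show "(\<lambda>S. S - A) ` {S \<in> CS n K. A \<subseteq> S} \<subseteq> {B. B \<subseteq> {1..n} - A \<and> card B = K - j}"
    proof (rule image_subsetI)
      fix S assume "S \<in> {S \<in> CS n K. A \<subseteq> S}"
      then have "S \<in> CS n K" "A \<subseteq> S" by auto
      then show "S - A \<in> {B. B \<subseteq> {1..n} - A \<and> card B = K - j}"
        using Au fA by (auto simp: CS_def card_Diff_subset)
    qed
    show "(\<lambda>B. B \<union> A) ` {B. B \<subseteq> {1..n} - A \<and> card B = K - j} \<subseteq> {S \<in> CS n K. A \<subseteq> S}"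
    proof (rule image_subsetI)
      fix B assume "B \<in> {B. B \<subseteq> {1..n} - A \<and> card B = K - j}"
      then have B: "B \<subseteq> {1..n} - A" "card B = K - j" by auto
      have fB: "finite B" using B(1) finite_subset by blast
      have "card (B \<union> A) = card B + card A" using B fA fB by (intro card_Un_disjoint) auto
      then show "B \<union> A \<in> {S \<in> CS n K. A \<subseteq> S}" using B Au jK by (auto simp: CS_def)
    qed
  qed
  then have "card {S\<in>CS n K. A \<subseteq> S} = card {B. B \<subseteq> {1..n} - A \<and> card B = K - j}"
    by (rule bij_betw_same_card)
  also have "\<dots> = card ({1..n} - A) choose (K - j)" by (rule card_subs) simp
  also have "card ({1..n} - A) = n - j" using Au fA by (simp add: card_Diff_subset)
  finally show ?thesis .
qed

lemma L1:
  assumes jK: "j \<le> K"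
  shows "(\<Sum>S\<in>CS n K. \<Sum>A\<in>{A. A \<subseteq> S \<and> card A = j}. f A)
        = real ((n - j) choose (K - j)) * (\<Sum>A\<in>CS n j. f A)"
proof -
  have "(\<Sum>S\<in>CS n K. \<Sum>A\<in>{A. A \<subseteq> S \<and> card A = j}. f A)
      = (\<Sum>S\<in>CS n K. \<Sum>A\<in>{A. A \<in> CS n j \<and> A \<subseteq> S}. f A)"
    by (intro sum.cong refl arg_cong2[where f=sum]) (auto simp: CS_def)
  also have "\<dots> = (\<Sum>A\<in>CS n j. \<Sum>S\<in>{S. S \<in> CS n K \<and> A \<subseteq> S}. f A)"
    by (rule sum.swap_restrict) auto
  also have "\<dots> = (\<Sum>A\<in>CS n j. real ((n - j) choose (K - j)) * f A)"
    using count_sup[OF _ jK] by (intro sum.cong refl) simp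
  finally show ?thesis by (simp add: sum_distrib_left)
qed

lemma Max_nn:
  fixes w :: "nat \<Rightarrow> real"
  assumes nn: "\<forall>i\<in>{1..n}. w i \<ge> 0"
    and R: "R \<subseteq> {1..n}" "R \<noteq> {}"
  shows "0 \<le> Max (w ` R)"
proof -
  obtain x where x: "x \<in> R" using R by blast
  have fR: "finite R" using R(1) by (rule finite_subset) simp
  have "w x \<le> Max (w ` R)" using x fR by (intro Max_ge) auto
  moreover have "0 \<le> w x" using nn x R by blast
  ultimately show ?thesis by linarith
qed

lemma avg_nn:
  assumes nn: "\<forall>i\<in>{1..n}. w i \<ge> 0" and k: "1 \<le> k"
  shows "0 \<le> avg w n k"
proof -
  have "0 \<le> SM w n k" unfolding SM_def
  proof (rule sum_nonneg)
    fix R assume "R \<in> CS n k"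
    then have R: "R \<subseteq> {1..n}" "card R = k" by (auto simp: CS_def)
    have "R \<noteq> {}" using R(2) k by auto
    then show "0 \<le> Max (w ` R)" by (rule Max_nn[OF nn R(1)])
  qed
  then show ?thesis by (simp add: avg_def)
qed


lemma fin_CS_mem: "S \<in> CS n k \<Longrightarrow> finite S \<and> S \<subseteq> {1..n} \<and> card S = k"
proof -
  assume "S \<in> CS n k"
  then have "S \<subseteq> {1..n}" "card S = k" by (auto simp: CS_def)
  moreover have "finite S" using \<open>S \<subseteq> {1..n}\<close> by (rule finite_subset) simp
  ultimately show ?thesis by simp
qed

lemma avg_step:
  assumes nn: "\<forall>i\<in>{1..n}. w i \<ge> 0" and k: "1 \<le> k" "k < n"
  shows "avg w n k \<le> avg w n (Suc k)"
proof -
  have per: "(\<Sum>A\<in>{A. A \<subseteq> S \<and> card A = k}. Max (w ` A)) \<le> real (Suc k) * Max (w ` S)"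
    if S: "S \<in> CS n (Suc k)" for S
  proof -
    have fS: "finite S" and cS: "card S = Suc k" using fin_CS_mem[OF S] by auto
    have c: "card {A. A \<subseteq> S \<and> card A = k} = Suc k" using card_subs[OF fS] cS by simp
    have "(\<Sum>A\<in>{A. A \<subseteq> S \<and> card A = k}. Max (w ` A)) \<le> (\<Sum>A\<in>{A. A \<subseteq> S \<and> card A = k}. Max (w ` S))"
    proof (rule sum_mono)
      fix A assume "A \<in> {A. A \<subseteq> S \<and> card A = k}"
      then have "A \<subseteq> S" "A \<noteq> {}" using k by auto
      then show "Max (w ` A) \<le> Max (w ` S)" using fS by (intro Max_mono) auto
    qed
    then show ?thesis using c by simp
  qed
  have "(\<Sum>S\<in>CS n (Suc k). \<Sum>A\<in>{A. A \<subseteq> S \<and> card A = k}. Max (w ` A))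
      \<le> (\<Sum>S\<in>CS n (Suc k). real (Suc k) * Max (w ` S))"
    by (rule sum_mono) (rule per)
  moreover have "(\<Sum>S\<in>CS n (Suc k). \<Sum>A\<in>{A. A \<subseteq> S \<and> card A = k}. Max (w ` A))
      = real ((n - k) choose (Suc k - k)) * SM w n k"
    unfolding SM_def by (rule L1) simp
  ultimately have h1: "real (n - k) * SM w n k \<le> real (Suc k) * SM w n (Suc k)"
    by (simp add: SM_def sum_distrib_left)
  have N: "(n choose Suc k) * Suc k = (n choose k) * (n - k)"
    using choose_mult[of k "Suc k" n] k by simp
  have h2: "real (n choose Suc k) * real (Suc k) = real (n choose k) * real (n - k)"
    unfolding of_nat_mult[symmetric] N by (rule refl)
  have a: "real (n choose k) > 0" "real (n choose Suc k) > 0" "real (n - k) > 0" "real (Suc k) > 0"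
    using k by auto
  have "avg w n k = real (n - k) * SM w n k / (real (n choose k) * real (n - k))"
    using a by (simp add: avg_def)
  also have "\<dots> \<le> real (Suc k) * SM w n (Suc k) / (real (n choose k) * real (n - k))"
    using h1 a by (intro divide_right_mono) auto
  also have "\<dots> = avg w n (Suc k)"
    unfolding h2[symmetric] avg_def using a by simp
  finally show ?thesis .
qed

lemma avg_mono:
  assumes nn: "\<forall>i\<in>{1..n}. w i \<ge> 0" and k: "1 \<le> k" "k \<le> k'" "k' \<le> n"
  shows "avg w n k \<le> avg w n k'"
  using k(2,3)
proof (induction k' rule: dec_induct)
  case base then show ?case by simp
next
  case (step m)
  then have "avg w n k \<le> avg w n m" by simp
  also have "\<dots> \<le> avg w n (Suc m)" using step k by (intro avg_step[OF nn]) auto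
  finally show ?case .
qed

lemma avg_subadd:
  assumes nn: "\<forall>i\<in>{1..n}. w i \<ge> 0" and k: "1 \<le> k1" "1 \<le> k2" "k1 + k2 \<le> n"
  shows "avg w n (k1 + k2) \<le> avg w n k1 + avg w n k2"
proof -
  define K where "K = k1 + k2"
  have per: "real (K choose k1) * Max (w ` S) \<le> (\<Sum>A\<in>{A. A \<subseteq> S \<and> card A = k1}. Max (w ` A))
      + (\<Sum>A\<in>{A. A \<subseteq> S \<and> card A = k2}. Max (w ` A))"
    if S: "S \<in> CS n K" for S
  proof -
    have fS: "finite S" and cS: "card S = K" and Su: "S \<subseteq> {1..n}" using fin_CS_mem[OF S] by auto
    have c: "card {A. A \<subseteq> S \<and> card A = k1} = K choose k1" using card_subs[OF fS] cS by simp
    have "(\<Sum>A\<in>{A. A \<subseteq> S \<and> card A = k1}. Max (w ` S))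
       \<le> (\<Sum>A\<in>{A. A \<subseteq> S \<and> card A = k1}. Max (w ` A) + Max (w ` (S - A)))"
    proof (rule sum_mono)
      fix A assume "A \<in> {A. A \<subseteq> S \<and> card A = k1}"
      then have A: "A \<subseteq> S" "card A = k1" by auto
      have fA: "finite A" using A(1) fS by (rule finite_subset)
      have ne1: "A \<noteq> {}" using A k by auto
      have "card (S - A) = card S - card A" by (rule card_Diff_subset[OF fA A(1)])
      then have c2: "card (S - A) = k2" using A cS K_def by simp
      have ne2: "S - A \<noteq> {}"
      proof
        assume "S - A = {}"
        with c2 have "k2 = 0" by simp
        with k(2) show False by simp
      qed
      have eq: "w ` S = w ` A \<union> w ` (S - A)" using A by auto
      have "Max (w ` S) = max (Max (w ` A)) (Max (w ` (S - A)))"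
        unfolding eq using fA fS ne1 ne2 by (intro Max.union) auto
      moreover have "0 \<le> Max (w ` A)" using A Su ne1 by (intro Max_nn[OF nn]) auto
      moreover have "0 \<le> Max (w ` (S - A))" using Su ne2 by (intro Max_nn[OF nn]) auto
      ultimately show "Max (w ` S) \<le> Max (w ` A) + Max (w ` (S - A))" by linarith
    qed
    also have "\<dots> = (\<Sum>A\<in>{A. A \<subseteq> S \<and> card A = k1}. Max (w ` A))
        + (\<Sum>A\<in>{A. A \<subseteq> S \<and> card A = k1}. Max (w ` (S - A)))"
      by (rule sum.distrib)
    also have "(\<Sum>A\<in>{A. A \<subseteq> S \<and> card A = k1}. Max (w ` (S - A)))
        = (\<Sum>A\<in>{A. A \<subseteq> S \<and> card A = k2}. Max (w ` A))"
    proof (rule sum.reindex_bij_betw[where h = "\<lambda>A. S - A" and g = "\<lambda>A. Max (w ` A)"])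
      show "bij_betw (\<lambda>A. S - A) {A. A \<subseteq> S \<and> card A = k1} {A. A \<subseteq> S \<and> card A = k2}"
      proof (rule bij_betw_byWitness[where f = "\<lambda>A. S - A" and f' = "\<lambda>A. S - A"])
        show "\<forall>a\<in>{A. A \<subseteq> S \<and> card A = k1}. S - (S - a) = a" by auto
        show "\<forall>a\<in>{A. A \<subseteq> S \<and> card A = k2}. S - (S - a) = a" by auto
        show "(\<lambda>A. S - A) ` {A. A \<subseteq> S \<and> card A = k1} \<subseteq> {A. A \<subseteq> S \<and> card A = k2}"
        proof (rule image_subsetI)
          fix A assume "A \<in> {A. A \<subseteq> S \<and> card A = k1}"
          then have A: "A \<subseteq> S" "card A = k1" by auto
          have fA: "finite A" using A(1) fS by (rule finite_subset)
          have "card (S - A) = card S - card A" by (rule card_Diff_subset[OF fA A(1)])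
          then show "S - A \<in> {A. A \<subseteq> S \<and> card A = k2}"
            using A cS K_def by simp
        qed
        show "(\<lambda>A. S - A) ` {A. A \<subseteq> S \<and> card A = k2} \<subseteq> {A. A \<subseteq> S \<and> card A = k1}"
        proof (rule image_subsetI)
          fix A assume "A \<in> {A. A \<subseteq> S \<and> card A = k2}"
          then have A: "A \<subseteq> S" "card A = k2" by auto
          have fA: "finite A" using A(1) fS by (rule finite_subset)
          have "card (S - A) = card S - card A" by (rule card_Diff_subset[OF fA A(1)])
          then show "S - A \<in> {A. A \<subseteq> S \<and> card A = k1}"
            using A cS K_def by simp
        qed
      qed
    qed
    finally show ?thesis using c by simp
  qed
  have "(\<Sum>S\<in>CS n K. real (K choose k1) * Max (w ` S))
      \<le> (\<Sum>S\<in>CS n K. (\<Sum>A\<in>{A. A \<subseteq> S \<and> card A = k1}. Max (w ` A))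
      + (\<Sum>A\<in>{A. A \<subseteq> S \<and> card A = k2}. Max (w ` A)))"
    by (rule sum_mono) (rule per)
  also have "\<dots> = real ((n - k1) choose k2) * SM w n k1 + real ((n - k2) choose k1) * SM w n k2"
  proof -
    have d1: "K - k1 = k2" "K - k2 = k1" "k1 \<le> K" "k2 \<le> K" using K_def by auto
    have "(\<Sum>S\<in>CS n K. \<Sum>A\<in>{A. A \<subseteq> S \<and> card A = k1}. Max (w ` A))
       = real ((n - k1) choose k2) * SM w n k1"
      unfolding SM_def using L1[OF d1(3), where n=n and f="\<lambda>A. Max (w ` A)"] d1 by simp
    moreover have "(\<Sum>S\<in>CS n K. \<Sum>A\<in>{A. A \<subseteq> S \<and> card A = k2}. Max (w ` A))
       = real ((n - k2) choose k1) * SM w n k2"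
      unfolding SM_def using L1[OF d1(4), where n=n and f="\<lambda>A. Max (w ` A)"] d1 by simp
    ultimately show ?thesis by (simp add: sum.distrib)
  qed
  finally have h1: "real (K choose k1) * SM w n K
      \<le> real ((n - k1) choose k2) * SM w n k1 + real ((n - k2) choose k1) * SM w n k2"
    by (simp add: SM_def sum_distrib_left)
  have e1: "real (n choose K) * real (K choose k1) = real (n choose k1) * real ((n - k1) choose k2)"
    using choose_mult[of k1 K n] k K_def by (simp flip: of_nat_mult)
  have e2: "real (n choose K) * real (K choose k2) = real (n choose k2) * real ((n - k2) choose k1)"
    using choose_mult[of k2 K n] k K_def by (simp flip: of_nat_mult)
  have e3: "K choose k1 = K choose k2" using binomial_symmetric[of k1 K] K_def by simp
  have pos: "real (n choose K) > 0" "real (K choose k1) > 0" "real (n choose k1) > 0"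
    "real (n choose k2) > 0" "real ((n - k1) choose k2) > 0" "real ((n - k2) choose k1) > 0"
    using k K_def by auto
  define a where "a = real (n choose K) * real (K choose k1)"
  have apos: "a > 0" using pos a_def by simp
  have "avg w n K = real (K choose k1) * SM w n K / a"
    using pos by (simp add: avg_def a_def)
  also have "\<dots> \<le> (real ((n - k1) choose k2) * SM w n k1 + real ((n - k2) choose k1) * SM w n k2) / a"
    using h1 apos by (intro divide_right_mono) auto
  also have "\<dots> = real ((n - k1) choose k2) * SM w n k1 / a + real ((n - k2) choose k1) * SM w n k2 / a"
    by (simp add: add_divide_distrib)
  also have "real ((n - k1) choose k2) * SM w n k1 / a = avg w n k1"
    unfolding a_def e1 avg_def using pos by simp
  also have "real ((n - k2) choose k1) * SM w n k2 / a = avg w n k2"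
    unfolding a_def e3 e2 avg_def using pos by simp
  finally show ?thesis using K_def by simp
qed

lemma avg_mult:
  assumes nn: "\<forall>i\<in>{1..n}. w i \<ge> 0" and k: "1 \<le> k" "k \<le> n"
  shows "1 \<le> K \<Longrightarrow> K \<le> c * k \<Longrightarrow> K \<le> n \<Longrightarrow> avg w n K \<le> real c * avg w n k"
proof (induction c arbitrary: K)
  case 0 then show ?case by simp
next
  case (Suc c)
  show ?case
  proof (cases "K \<le> k")
    case True
    then have "avg w n K \<le> avg w n k" using Suc.prems k by (intro avg_mono[OF nn]) auto
    moreover have "real c * avg w n k \<ge> 0" using avg_nn[OF nn k(1)] by simp
    ultimately show ?thesis by (simp add: algebra_simps)
  next
    case False
    obtain K' where KK: "K = k + K'" using False by (metis le_add_diff_inverse nat_le_linear)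
    have K1: "1 \<le> K'" using False KK by simp
    have K2: "K' \<le> c * k" using Suc.prems(2) KK by simp
    have K3: "k + K' \<le> n" using Suc.prems(3) KK by simp
    have "avg w n K \<le> avg w n k + avg w n K'"
      unfolding KK by (rule avg_subadd[OF nn k(1) K1 K3])
    also have "avg w n K' \<le> real c * avg w n k"
      by (rule Suc.IH[OF K1 K2]) (use K3 in simp)
    finally show ?thesis by (simp add: algebra_simps)
  qed
qed


lemma nat_floor_ge1: "1 \<le> x \<Longrightarrow> 1 \<le> nat \<lfloor>x\<rfloor>"
proof -
  assume "1 \<le> x"
  then have "(1::int) \<le> \<lfloor>x\<rfloor>" by (simp add: le_floor_iff)
  then show ?thesis by linarith
qed

lemma eta_nn:
  assumes nn: "\<forall>i\<in>{1..n}. w i \<ge> 0"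
  shows "0 \<le> eta w n x"
proof (cases "x < 1")
  case True then show ?thesis by (simp add: eta_def)
next
  case False
  then have "1 \<le> nat \<lfloor>x\<rfloor>" by (intro nat_floor_ge1) simp
  then show ?thesis using False eta_avg[of x w n] avg_nn[OF nn] by simp
qed

lemma nat_floor_le: "y \<le> real n \<Longrightarrow> nat \<lfloor>y\<rfloor> \<le> n"
proof -
  assume "y \<le> real n"
  then have "\<lfloor>y\<rfloor> \<le> \<lfloor>real n\<rfloor>" by (rule floor_mono)
  then show ?thesis by simp
qed

lemma nat_floor_bounds:
  assumes "0 \<le> x" shows "real (nat \<lfloor>x\<rfloor>) \<le> x" "x < real (nat \<lfloor>x\<rfloor>) + 1"
proof -
  have e: "real (nat \<lfloor>x\<rfloor>) = of_int \<lfloor>x\<rfloor>" using assms by simp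
  show "real (nat \<lfloor>x\<rfloor>) \<le> x" unfolding e by (rule of_int_floor_le)
  show "x < real (nat \<lfloor>x\<rfloor>) + 1" unfolding e by (rule real_of_int_floor_add_one_gt)
qed

lemma part1:
  assumes nn: "\<forall>i\<in>{1..n}. w i \<ge> 0"
  shows "mono_on {0..real n} (eta w n)"
proof (rule mono_onI)
  fix x y assume x: "x \<in> {0..real n}" and y: "y \<in> {0..real n}" and xy: "x \<le> y"
  show "eta w n x \<le> eta w n y"
  proof (cases "x < 1")
    case True then show ?thesis using eta_nn[OF nn, of y] by (simp add: eta_def)
  next
    case False
    then have x1: "1 \<le> x" and y1: "1 \<le> y" using xy by auto
    have "nat \<lfloor>x\<rfloor> \<le> nat \<lfloor>y\<rfloor>" using xy by (simp add: floor_mono nat_mono)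
    moreover have "nat \<lfloor>y\<rfloor> \<le> n" using y by (intro nat_floor_le) auto
    ultimately have "avg w n (nat \<lfloor>x\<rfloor>) \<le> avg w n (nat \<lfloor>y\<rfloor>)"
      using nat_floor_ge1[OF x1] by (intro avg_mono[OF nn]) auto
    then show ?thesis using eta_avg[OF x1] eta_avg[OF y1] by simp
  qed
qed

lemma part2:
  assumes nn: "\<forall>i\<in>{1..n}. w i \<ge> 0" and a1: "1 \<le> a" and h1: "1 \<le> h" and hn: "h \<le> real n / a"
  shows "eta w n (a * h) \<le> 2 * a * eta w n h"
proof -
  have ahn: "a * h \<le> real n" using hn a1 by (simp add: pos_le_divide_eq mult.commute)
  have hah: "h \<le> a * h" using mult_right_mono[of 1 a h] a1 h1 by simp
  have ah1: "1 \<le> a * h" using hah h1 by linarith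
  define k where "k = nat \<lfloor>h\<rfloor>"
  define K where "K = nat \<lfloor>a * h\<rfloor>"
  have k1: "1 \<le> k" unfolding k_def by (rule nat_floor_ge1[OF h1])
  have K1: "1 \<le> K" unfolding K_def by (rule nat_floor_ge1[OF ah1])
  have Kn: "K \<le> n" unfolding K_def by (rule nat_floor_le[OF ahn])
  have kn: "k \<le> n" unfolding k_def using hah ahn by (intro nat_floor_le) simp
  have rk: "h < real k + 1" unfolding k_def using h1 by (intro nat_floor_bounds) simp
  have rK: "real K \<le> a * h" unfolding K_def using ah1 by (intro nat_floor_bounds) simp
  have kpos: "real k > 0" using k1 by simp
  define c where "c = nat \<lceil>real K / real k\<rceil>"
  have "0 \<le> real K / real k" by simp
  then have "\<lceil>0::real\<rceil> \<le> \<lceil>real K / real k\<rceil>" by (rule ceiling_mono)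
  then have cpos: "0 \<le> \<lceil>real K / real k\<rceil>" by simp
  have rc: "real c = of_int \<lceil>real K / real k\<rceil>" unfolding c_def using cpos by simp
  have c_ge: "real K / real k \<le> real c" unfolding rc by (rule le_of_int_ceiling)
  have c_lt: "real c - 1 < real K / real k" unfolding rc using ceiling_correct[of "real K / real k"] by simp
  have Kck: "K \<le> c * k"
  proof -
    have "real K \<le> real c * real k" using c_ge kpos by (simp add: divide_le_eq)
    then show ?thesis by (simp flip: of_nat_mult)
  qed
  have c2a: "real c \<le> 2 * a"
  proof (cases "c \<le> 1")
    case True then have "real c \<le> 1" by simp
    then show ?thesis using a1 by simp
  next
    case False
    define c' where "c' = c - 2"
    have cc: "c = Suc (Suc c')" using False c'_def by simp
    define k' where "k' = k - 1"
    have kk: "k = Suc k'" using k1 k'_def by simp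
    have "(real c - 1) * real k < real K" using c_lt kpos by (simp add: less_divide_eq)
    then have "real ((c - 1) * k) < real K" using False by (simp add: of_nat_diff)
    then have "(c - 1) * k < K" by (simp only: of_nat_less_iff)
    then have A: "(c - 1) * k + 1 \<le> K" by simp
    have B: "c * (k + 1) \<le> 2 * ((c - 1) * k + 1)" unfolding cc kk by (simp add: algebra_simps)
    have "real c * (real k + 1) = real (c * (k + 1))" by (simp add: algebra_simps)
    also have "\<dots> \<le> real (2 * K)"
    proof -
      have "2 * ((c - 1) * k + 1) \<le> 2 * K" using A by simp
      with B have "c * (k + 1) \<le> 2 * K" by (rule le_trans)
      then show ?thesis by (simp only: of_nat_le_iff)
    qed
    also have "\<dots> \<le> 2 * (a * h)" using rK by simp
    also have "\<dots> < 2 * (a * (real k + 1))" using rk a1 by simp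
    finally have "real c * (real k + 1) < (2 * a) * (real k + 1)" by (simp add: algebra_simps)
    then show ?thesis by (rule mult_right_less_imp_less[THEN less_imp_le]) simp
  qed
  have "eta w n (a * h) = avg w n K" unfolding K_def by (rule eta_avg[OF ah1])
  also have "\<dots> \<le> real c * avg w n k" by (rule avg_mult[OF nn k1 kn K1 Kck Kn])
  also have "\<dots> \<le> 2 * a * avg w n k" using c2a avg_nn[OF nn k1] by (rule mult_right_mono)
  also have "avg w n k = eta w n h" unfolding k_def by (rule eta_avg[OF h1, symmetric])
  finally show ?thesis .
qed

lemma binom_sum1:
  "(\<Sum>k\<le>m. real (m choose k) * p ^ k * (1 - p) ^ (m - k)) = 1"
proof -
  have one: "p + (1 - p) = 1" by simp
  have "(p + (1 - p)) ^ m = (\<Sum>k\<le>m. real (m choose k) * p ^ k * (1 - p) ^ (m - k))"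
    by (rule binomial_ring)
  then show ?thesis by (simp only: one power_one)
qed

lemma binom_mean:
  "(\<Sum>k\<le>m. real (m choose k) * p ^ k * (1 - p) ^ (m - k) * real k) = real m * p"
proof (cases m)
  case 0 then show ?thesis by simp
next
  case (Suc m')
  have g: "real (Suc m' choose Suc k) * p ^ Suc k * (1 - p) ^ (Suc m' - Suc k) * real (Suc k)
      = real (Suc m') * p * (real (m' choose k) * p ^ k * (1 - p) ^ (m' - k))" for k
  proof -
    have X: "real (Suc k) * real (Suc m' choose Suc k) = real (Suc m') * real (m' choose k)"
      using Suc_times_binomial[of k m'] by (simp only: of_nat_mult[symmetric])
    have "real (Suc m' choose Suc k) * p ^ Suc k * (1 - p) ^ (Suc m' - Suc k) * real (Suc k)
      = (real (Suc k) * real (Suc m' choose Suc k)) * (p * (p ^ k * (1 - p) ^ (m' - k)))"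
      unfolding power_Suc diff_Suc_Suc by (simp only: mult_ac)
    also have "\<dots> = (real (Suc m') * real (m' choose k)) * (p * (p ^ k * (1 - p) ^ (m' - k)))"
      unfolding X ..
    also have "\<dots> = real (Suc m') * p * (real (m' choose k) * p ^ k * (1 - p) ^ (m' - k))"
      by (simp only: mult_ac)
    finally show ?thesis .
  qed
  have "(\<Sum>k\<le>Suc m'. real (Suc m' choose k) * p ^ k * (1 - p) ^ (Suc m' - k) * real k)
      = (\<Sum>k\<le>m'. real (Suc m' choose Suc k) * p ^ Suc k * (1 - p) ^ (Suc m' - Suc k) * real (Suc k))"
    by (subst sum.atMost_Suc_shift) (simp only: of_nat_0 mult_zero_right add_0_left)
  also have "\<dots> = (\<Sum>k\<le>m'. real (Suc m') * p * (real (m' choose k) * p ^ k * (1 - p) ^ (m' - k)))"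
    by (rule sum.cong[OF refl]) (rule g)
  also have "\<dots> = real (Suc m') * p * (\<Sum>k\<le>m'. real (m' choose k) * p ^ k * (1 - p) ^ (m' - k))"
    by (rule sum_distrib_left[symmetric])
  also have "\<dots> = real (Suc m') * p" by (simp only: binom_sum1 mult_1_right)
  finally have res: "(\<Sum>k\<le>Suc m'. real (Suc m' choose k) * p ^ k * (1 - p) ^ (Suc m' - k) * real k) = real (Suc m') * p" .
  show ?thesis unfolding Suc by (rule res)
qed

lemma part3:
  assumes nn: "\<forall>i\<in>{1..n}. w i \<ge> 0" and mp1: "1 \<le> real m * p" and mpm: "real m * p \<le> real m"
    and mn: "m \<le> n"
  shows "measure_pmf.expectation (binomial_pmf m p) (\<lambda>k. eta w n (real k)) \<le> 3 * eta w n (real m * p)"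
proof -
  define \<mu> where "\<mu> = real m * p"
  define E where "E = eta w n \<mu>"
  have m0: "m > 0" using mp1 by (cases m) auto
  have p0: "p > 0"
  proof (rule ccontr)
    assume "\<not> 0 < p"
    then have "real m * p \<le> 0" by (simp add: mult_nonneg_nonpos)
    with mp1 show False by simp
  qed
  have p1: "p \<le> 1" using mpm m0 by simp
  have mu0: "\<mu> > 0" and mu1: "1 \<le> \<mu>" using mp1 \<mu>_def by auto
  have E0: "0 \<le> E" unfolding E_def by (rule eta_nn[OF nn])
  have "real m \<le> real n" using mn by simp
  then have mun: "\<mu> \<le> real n" using mpm \<mu>_def by linarith
  have pw: "eta w n (real k) \<le> E + 2 * (real k / \<mu>) * E" if km: "k \<le> m" for k
  proof -
    have nnr: "0 \<le> 2 * (real k / \<mu>) * E" using mu0 E0 by (intro mult_nonneg_nonneg) auto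
    show ?thesis
    proof (cases "real k < 1")
      case True then show ?thesis using E0 nnr by (simp add: eta_def)
    next
      case False
      show ?thesis
      proof (cases "real k \<le> \<mu>")
        case True
        have "eta w n (real k) \<le> eta w n \<mu>"
          by (rule mono_onD[OF part1[OF nn]]) (use True mun mu0 in auto)
        then show ?thesis using nnr E_def by simp
      next
        case kmu: False
        define a where "a = real k / \<mu>"
        have a1: "1 \<le> a" unfolding a_def using kmu mu0 by simp
        have kn: "real k \<le> real n" using km mn by simp
        have ah: "a * \<mu> = real k" unfolding a_def using mu0 by simp
        have "\<mu> \<le> real n / a"
        proof -
          have "real n / a = real n * \<mu> / real k" unfolding a_def by simp
          moreover have "\<mu> * real k \<le> real n * \<mu>" using kn mu0 by (simp add: mult.commute)
          moreover have "real k > 0" using False by simp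
          ultimately show ?thesis by (simp add: le_divide_eq)
        qed
        then have "eta w n (a * \<mu>) \<le> 2 * a * eta w n \<mu>" by (rule part2[OF nn a1 mu1])
        then show ?thesis unfolding ah using E0 E_def a_def by simp
      qed
    qed
  qed
  define cf where "cf k = real (m choose k) * p ^ k * (1 - p) ^ (m - k)" for k
  have cf0: "0 \<le> cf k" for k unfolding cf_def using p0 p1 by simp
  have "measure_pmf.expectation (binomial_pmf m p) (\<lambda>k. eta w n (real k))
      = (\<Sum>k\<le>m. cf k * eta w n (real k))"
    using p0 p1 by (subst expectation_binomial_pmf') (auto simp: cf_def)
  also have "\<dots> \<le> (\<Sum>k\<le>m. cf k * (E + 2 * (real k / \<mu>) * E))"
    by (rule sum_mono) (use pw cf0 in \<open>auto intro: mult_left_mono\<close>)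
  also have "\<dots> = (\<Sum>k\<le>m. E * cf k + (2 * E / \<mu>) * (cf k * real k))"
    by (rule sum.cong[OF refl]) (simp add: algebra_simps)
  also have "\<dots> = E * (\<Sum>k\<le>m. cf k) + (2 * E / \<mu>) * (\<Sum>k\<le>m. cf k * real k)"
    by (simp add: sum.distrib sum_distrib_left)
  also have "\<dots> = 3 * E"
  proof -
    have s1: "(\<Sum>k\<le>m. cf k) = 1" unfolding cf_def by (rule binom_sum1)
    have s2: "(\<Sum>k\<le>m. cf k * real k) = \<mu>" unfolding cf_def \<mu>_def by (rule binom_mean)
    show ?thesis unfolding s1 s2 using mu0 by simp
  qed
  finally show ?thesis unfolding E_def \<mu>_def .
qed

theorem lemma4p1:
  fixes w :: "nat \<Rightarrow> real" and n :: nat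
  assumes nonneg: "\<And>i. i \<in> {1..n} \<Longrightarrow> w i \<ge> 0"
  shows "mono_on {0..real n} (eta w n)
    \<and> (\<forall>a h. a \<ge> 1 \<and> 1 \<le> h \<and> h \<le> real n / a \<longrightarrow> eta w n (a * h) \<le> 2 * a * eta w n h)
    \<and> (\<forall>(m::nat) (p::real). 1 \<le> real m * p \<and> real m * p \<le> real m \<and> m \<le> n \<longrightarrow>
         measure_pmf.expectation (binomial_pmf m p) (\<lambda>k. eta w n (real k))
           \<le> 3 * eta w n (real m * p))"
proof -
  have nn: "\<forall>i\<in>{1..n}. w i \<ge> 0" using nonneg by blast
  show ?thesis using part1[OF nn] part2[OF nn] part3[OF nn] by blast
qed

end
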